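(* Let $R$ be an associative ring with identity, let $a,b,c,y\in R$ and suppose that both $b$ and $c$ are regular. Then the following are equivalent: (i) $y$ is the $(b,c)$-inverse of $a$; (ii) $y$ is a hybrid $(b,c)$-inverse of $a$; (iii) $y$ is an annihilator $(b,c)$-inverse of $a$.
   Context: For $a,b,c\in R$, $y$ is the $(b,c)$-inverse of $a$ if $y\in (bRy)\cap(yRc)$, $yab=b$ and $cay=c$ (such $y$ is unique). $y$ is a hybrid $(b,c)$-inverse of $a$ if $yay=y$, $yR=bR$ and $r(y)=r(c)$. $y$ is an annihilator $(b,c)$-inverse of $a$ if $yay=y$, $l(y)=l(b)$ and $r(y)=r(c)$. Here $l(x)=\{z\in R:zx=0\}$, $r(x)=\{z\in R:xz=0\}$, $xR=\{xz:z\in R\}$. An element is regular if $x=xzx$ for some $z\in R$. *)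

theory Defs
  imports Main
begin

definition lann :: "'a::ring_1 \<Rightarrow> 'a set" where
  "lann x = {z. z * x = 0}"

definition rann :: "'a::ring_1 \<Rightarrow> 'a set" where
  "rann x = {z. x * z = 0}"

definition rideal :: "'a::ring_1 \<Rightarrow> 'a set" where
  "rideal x = {x * z | z. True}"

definition regular :: "'a::ring_1 \<Rightarrow> bool" where
  "regular x \<longleftrightarrow> (\<exists>z. x = x * z * x)"

definition bc_inverse :: "'a::ring_1 \<Rightarrow> 'a \<Rightarrow> 'a \<Rightarrow> 'a \<Rightarrow> bool" where
  "bc_inverse a b c y \<longleftrightarrow>
     (\<exists>s. y = b * s * y) \<and> (\<exists>t. y = y * t * c) \<and> y * a * b = b \<and> c * a * y = c"

definition hybrid_bc_inverse :: "'a::ring_1 \<Rightarrow> 'a \<Rightarrow> 'a \<Rightarrow> 'a \<Rightarrow> bool" where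
  "hybrid_bc_inverse a b c y \<longleftrightarrow>
     y * a * y = y \<and> rideal y = rideal b \<and> rann y = rann c"

definition annihilator_bc_inverse :: "'a::ring_1 \<Rightarrow> 'a \<Rightarrow> 'a \<Rightarrow> 'a \<Rightarrow> bool" where
  "annihilator_bc_inverse a b c y \<longleftrightarrow>
     y * a * y = y \<and> lann y = lann b \<and> rann y = rann c"

end

theory Submission
  imports Defs
begin

lemma rideal_eq:
  fixes x z :: "'a::ring_1"
  shows "rideal x = rideal z \<longleftrightarrow> (\<exists>u. x = z*u) \<and> (\<exists>p. z = x*p)"
proof
  assume h: "rideal x = rideal z"
  have "x \<in> rideal x" "z \<in> rideal z" unfolding rideal_def by (auto intro: exI[of _ 1])
  then show "(\<exists>u. x = z*u) \<and> (\<exists>p. z = x*p)" using h unfolding rideal_def by auto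
next
  assume "(\<exists>u. x = z*u) \<and> (\<exists>p. z = x*p)"
  then obtain u p where u: "x = z*u" and p: "z = x*p" by blast
  show "rideal x = rideal z"
    unfolding rideal_def
  proof (intro set_eqI iffI)
    fix w assume "w \<in> {x * z |z. True}"
    then obtain q where "w = x*q" by blast
    then have "w = z*(u*q)" using u by (simp add: mult.assoc)
    then show "w \<in> {z * q |q. True}" by blast
  next
    fix w assume "w \<in> {z * x |x. True}"
    then obtain q where "w = z*q" by blast
    then have "w = x*(p*q)" using p by (simp add: mult.assoc)
    then show "w \<in> {x * q |q. True}" by blast
  qed
qed

lemma rann_eq: "rann (x::'a::ring_1) = rann z \<longleftrightarrow> (\<forall>w. x*w = 0 \<longleftrightarrow> z*w = 0)"
  unfolding rann_def by auto

lemma lann_eq: "lann (x::'a::ring_1) = lann z \<longleftrightarrow> (\<forall>w. w*x = 0 \<longleftrightarrow> w*z = 0)"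
  unfolding lann_def by auto

theorem theorem3p11:
  fixes a b c y :: "'a::ring_1"
  assumes "regular b" and "regular c"
  shows "(bc_inverse a b c y \<longleftrightarrow> hybrid_bc_inverse a b c y) \<and>
         (hybrid_bc_inverse a b c y \<longleftrightarrow> annihilator_bc_inverse a b c y)"
proof -
  obtain w where w: "b = b*w*b" using assms(1) unfolding regular_def by blast
  obtain v where v: "c = c*v*c" using assms(2) unfolding regular_def by blast
  have A: "bc_inverse a b c y \<Longrightarrow> hybrid_bc_inverse a b c y"
  proof -
    assume "bc_inverse a b c y"
    then obtain s t where s: "y = b*s*y" and t: "y = y*t*c" and h1: "y*a*b = b" and h2: "c*a*y = c"
      unfolding bc_inverse_def by blast
    have yay: "y*a*y = y"
    proof -
      have "y*a*y = (y*a*b)*s*y" using s by (metis mult.assoc)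
      also have "\<dots> = y" using h1 s by simp
      finally show ?thesis .
    qed
    have r1: "rideal y = rideal b" unfolding rideal_eq
      using s h1 by (metis mult.assoc)
    have r2: "rann y = rann c" unfolding rann_eq
    proof (intro allI iffI)
      fix z assume "y*z = 0"
      then have "c*a*y*z = 0" by (simp add: mult.assoc)
      then show "c*z = 0" using h2 by simp
    next
      fix z assume "c*z = 0"
      then have "y*t*c*z = 0" by (simp add: mult.assoc)
      then show "y*z = 0" using t by simp
    qed
    show ?thesis unfolding hybrid_bc_inverse_def using yay r1 r2 by blast
  qed
  have B: "hybrid_bc_inverse a b c y \<Longrightarrow> bc_inverse a b c y"
  proof -
    assume "hybrid_bc_inverse a b c y"
    then have yay: "y*a*y = y" and r1: "rideal y = rideal b" and r2: "rann y = rann c"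
      unfolding hybrid_bc_inverse_def by auto
    obtain u p where u: "y = b*u" and p: "b = y*p" using r1 unfolding rideal_eq by blast
    have e1: "y = b*(u*a)*y" using u yay by (metis mult.assoc)
    have e2: "y*a*b = b" using yay p by (metis mult.assoc)
    have "c*(1 - v*c) = 0" using v by (simp add: algebra_simps mult.assoc)
    then have "y*(1 - v*c) = 0" using r2 unfolding rann_eq by blast
    then have e3: "y = y*v*c" by (simp add: algebra_simps mult.assoc)
    have "y*(1 - a*y) = 0" using yay by (simp add: algebra_simps mult.assoc)
    then have "c*(1 - a*y) = 0" using r2 unfolding rann_eq by blast
    then have e4: "c*a*y = c" by (simp add: algebra_simps mult.assoc)
    show ?thesis unfolding bc_inverse_def using e1 e2 e3 e4 by blast
  qed
  have C: "y*a*y = y \<Longrightarrow> rideal y = rideal b \<longleftrightarrow> lann y = lann b"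
  proof -
    assume yay: "y*a*y = y"
    show ?thesis
    proof
      assume "rideal y = rideal b"
      then obtain u p where u: "y = b*u" and p: "b = y*p" unfolding rideal_eq by blast
      show "lann y = lann b" unfolding lann_eq
      proof (intro allI iffI)
        fix z assume "z*y = 0"
        then have "z*y*p = 0" by simp
        then show "z*b = 0" using p by (simp add: mult.assoc)
      next
        fix z assume "z*b = 0"
        then have "z*b*u = 0" by simp
        then show "z*y = 0" using u by (simp add: mult.assoc)
      qed
    next
      assume l: "lann y = lann b"
      have "(1 - y*a)*y = 0" using yay by (simp add: algebra_simps)
      then have "(1 - y*a)*b = 0" using l unfolding lann_eq by blast
      then have p: "b = y*(a*b)" by (simp add: algebra_simps mult.assoc)
      have "(1 - b*w)*b = 0" using w by (simp add: algebra_simps)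
      then have "(1 - b*w)*y = 0" using l unfolding lann_eq by blast
      then have u: "y = b*(w*y)" by (simp add: algebra_simps mult.assoc)
      show "rideal y = rideal b" unfolding rideal_eq using p u by blast
    qed
  qed
  show ?thesis using A B C unfolding hybrid_bc_inverse_def annihilator_bc_inverse_def by blast
qed

end
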